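(* Let $S,T$ be left semi-braces, $\sigma:T\to\mathrm{Aut}(S)$ a homomorphism from $(T,\cdot)$ into the automorphism group of $(S,+,\cdot)$ (write ${}^ua=\sigma(u)(a)$), and $\delta:S\to\mathrm{End}(T)$ an anti-homomorphism from $(S,+)$ into the automorphism group of $(T,+)$ (write $u^a=\delta(a)(u)$) such that $$(uv)^{\lambda_a({}^ub)}+u\left((u^{-1})^b+w\right)=u\left(v^b+w\right)$$ for all $a,b\in S$, $u,v,w\in T$. Then the double semidirect product of $S$ and $T$ via $\sigma$ and $\delta$, i.e. $S\times T$ with $(a,u)+(b,v)=(a+b,u^b+v)$ and $(a,u)(b,v)=(a\,{}^ub,uv)$, is a left semi-brace. If moreover $S$ and $T$ are left cancellative left semi-braces, then this double semidirect product is a left cancellative left semi-brace.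
   Context: A left semi-brace is a triple $(S,+,\cdot)$ such that $(S,+)$ is a semigroup, $(S,\cdot)$ is a group, and $a(b+c)=ab+a(a^{-1}+c)$ for all $a,b,c\in S$; it is left cancellative if $(S,+)$ is left cancellative. Set $\lambda_a(b)=a(a^{-1}+b)$. An automorphism of $(S,+,\cdot)$ is a bijection preserving both operations. That $\delta$ is an anti-homomorphism from $(S,+)$ means $u^{a+b}=(u^a)^b$ for all $a,b\in S$, $u\in T$. *)

theory Defs
  imports Main
begin

definition is_semigroup_op :: "('a \<Rightarrow> 'a \<Rightarrow> 'a) \<Rightarrow> bool" where
  "is_semigroup_op p \<longleftrightarrow> (\<forall>a b c. p (p a b) c = p a (p b c))"

definition is_group_op :: "('a \<Rightarrow> 'a \<Rightarrow> 'a) \<Rightarrow> bool" where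
  "is_group_op m \<longleftrightarrow> is_semigroup_op m \<and>
     (\<exists>e. (\<forall>a. m e a = a \<and> m a e = a) \<and> (\<forall>a. \<exists>b. m a b = e \<and> m b a = e))"

definition gunit :: "('a \<Rightarrow> 'a \<Rightarrow> 'a) \<Rightarrow> 'a" where
  "gunit m = (THE e. \<forall>a. m e a = a \<and> m a e = a)"

definition ginv :: "('a \<Rightarrow> 'a \<Rightarrow> 'a) \<Rightarrow> 'a \<Rightarrow> 'a" where
  "ginv m a = (THE b. m a b = gunit m \<and> m b a = gunit m)"

definition left_semi_brace :: "('a \<Rightarrow> 'a \<Rightarrow> 'a) \<Rightarrow> ('a \<Rightarrow> 'a \<Rightarrow> 'a) \<Rightarrow> bool" where
  "left_semi_brace add mul \<longleftrightarrow> is_semigroup_op add \<and> is_group_op mul \<and>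
     (\<forall>a b c. mul a (add b c) = add (mul a b) (mul a (add (ginv mul a) c)))"

definition left_cancellative :: "('a \<Rightarrow> 'a \<Rightarrow> 'a) \<Rightarrow> bool" where
  "left_cancellative add \<longleftrightarrow> (\<forall>a b c. add a b = add a c \<longrightarrow> b = c)"

definition lam :: "('a \<Rightarrow> 'a \<Rightarrow> 'a) \<Rightarrow> ('a \<Rightarrow> 'a \<Rightarrow> 'a) \<Rightarrow> 'a \<Rightarrow> 'a \<Rightarrow> 'a" where
  "lam add mul a b = mul a (add (ginv mul a) b)"

definition is_brace_aut :: "('a \<Rightarrow> 'a \<Rightarrow> 'a) \<Rightarrow> ('a \<Rightarrow> 'a \<Rightarrow> 'a) \<Rightarrow> ('a \<Rightarrow> 'a) \<Rightarrow> bool" where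
  "is_brace_aut add mul f \<longleftrightarrow> bij f \<and> (\<forall>a b. f (add a b) = add (f a) (f b)) \<and>
     (\<forall>a b. f (mul a b) = mul (f a) (f b))"

definition is_add_aut :: "('a \<Rightarrow> 'a \<Rightarrow> 'a) \<Rightarrow> ('a \<Rightarrow> 'a) \<Rightarrow> bool" where
  "is_add_aut add f \<longleftrightarrow> bij f \<and> (\<forall>a b. f (add a b) = add (f a) (f b))"

definition dsd_add :: "('a \<Rightarrow> 'a \<Rightarrow> 'a) \<Rightarrow> ('b \<Rightarrow> 'b \<Rightarrow> 'b) \<Rightarrow> ('a \<Rightarrow> 'b \<Rightarrow> 'b)
    \<Rightarrow> 'a \<times> 'b \<Rightarrow> 'a \<times> 'b \<Rightarrow> 'a \<times> 'b" where
  "dsd_add addS addT \<delta> x y = (addS (fst x) (fst y), addT (\<delta> (fst y) (snd x)) (snd y))"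

definition dsd_mul :: "('a \<Rightarrow> 'a \<Rightarrow> 'a) \<Rightarrow> ('b \<Rightarrow> 'b \<Rightarrow> 'b) \<Rightarrow> ('b \<Rightarrow> 'a \<Rightarrow> 'a)
    \<Rightarrow> 'a \<times> 'b \<Rightarrow> 'a \<times> 'b \<Rightarrow> 'a \<times> 'b" where
  "dsd_mul mulS mulT \<sigma> x y = (mulS (fst x) (\<sigma> (snd x) (fst y)), mulT (snd x) (snd y))"

end

theory Submission
  imports Defs
begin

lemma grp_unit:
  assumes "is_group_op m"
  shows "m (gunit m) a = a" "m a (gunit m) = a"
proof -
  obtain e where e: "\<forall>a. m e a = a \<and> m a e = a" using assms unfolding is_group_op_def by blast
  have "gunit m = e" unfolding gunit_def
  proof (rule the_equality)
    show "\<forall>a. m e a = a \<and> m a e = a" by fact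
  next
    fix e' assume "\<forall>a. m e' a = a \<and> m a e' = a"
    then show "e' = e" using e by metis
  qed
  then show "m (gunit m) a = a" "m a (gunit m) = a" using e by auto
qed

lemma grp_assoc: "is_group_op m \<Longrightarrow> m (m a b) c = m a (m b c)"
  unfolding is_group_op_def is_semigroup_op_def by blast

lemma grp_inv:
  assumes "is_group_op m"
  shows "m a (ginv m a) = gunit m" "m (ginv m a) a = gunit m"
proof -
  obtain e where e: "\<forall>a. m e a = a \<and> m a e = a" and i: "\<forall>a. \<exists>b. m a b = e \<and> m b a = e"
    using assms unfolding is_group_op_def by blast
  have ge: "gunit m = e" using grp_unit[OF assms] e by metis
  obtain b where b: "m a b = e" "m b a = e" using i by blast
  have "ginv m a = b" unfolding ginv_def ge
  proof (rule the_equality)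
    show "m a b = e \<and> m b a = e" using b by simp
  next
    fix b' assume h: "m a b' = e \<and> m b' a = e"
    have "b' = m b' (m a b)" using b e by simp
    also have "\<dots> = m (m b' a) b" using grp_assoc[OF assms] by simp
    also have "\<dots> = b" using h e by simp
    finally show "b' = b" .
  qed
  then show "m a (ginv m a) = gunit m" "m (ginv m a) a = gunit m" using b ge by auto
qed

lemma ginv_eq:
  assumes "is_group_op m" "m a b = gunit m"
  shows "ginv m a = b"
proof -
  have "ginv m a = m (ginv m a) (m a b)" using assms grp_unit[OF assms(1)] by simp
  also have "\<dots> = m (m (ginv m a) a) b" using grp_assoc[OF assms(1)] by simp
  also have "\<dots> = b" using grp_inv[OF assms(1)] grp_unit[OF assms(1)] by simp
  finally show ?thesis .
qed

lemma grp_idem: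
  assumes "is_group_op m" "m x x = x"
  shows "x = gunit m"
proof -
  have "x = m (m (ginv m x) x) x" using grp_inv[OF assms(1)] grp_unit[OF assms(1)] by simp
  also have "\<dots> = m (ginv m x) (m x x)" using grp_assoc[OF assms(1)] by simp
  also have "\<dots> = gunit m" using assms(2) grp_inv[OF assms(1)] by simp
  finally show ?thesis .
qed

theorem corollary39:
  fixes addS mulS :: "'a \<Rightarrow> 'a \<Rightarrow> 'a"
    and addT mulT :: "'b \<Rightarrow> 'b \<Rightarrow> 'b"
    and \<sigma> :: "'b \<Rightarrow> 'a \<Rightarrow> 'a"
    and \<delta> :: "'a \<Rightarrow> 'b \<Rightarrow> 'b"
  assumes S: "left_semi_brace addS mulS"
    and T: "left_semi_brace addT mulT"
    and sigma_aut: "\<And>u. is_brace_aut addS mulS (\<sigma> u)"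
    and sigma_hom: "\<And>u v. \<sigma> (mulT u v) = \<sigma> u \<circ> \<sigma> v"
    and delta_aut: "\<And>a. is_add_aut addT (\<delta> a)"
    and delta_antihom: "\<And>a b u. \<delta> (addS a b) u = \<delta> b (\<delta> a u)"
    and compat: "\<And>a b u v w.
       addT (\<delta> (lam addS mulS a (\<sigma> u b)) (mulT u v))
            (mulT u (addT (\<delta> b (ginv mulT u)) w))
       = mulT u (addT (\<delta> b v) w)"
  shows "left_semi_brace (dsd_add addS addT \<delta>) (dsd_mul mulS mulT \<sigma>)
    \<and> (left_cancellative addS \<and> left_cancellative addT
         \<longrightarrow> left_cancellative (dsd_add addS addT \<delta>))"
proof -
  have gS: "is_group_op mulS" and gT: "is_group_op mulT"
    and aS: "is_semigroup_op addS" and aT: "is_semigroup_op addT"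
    and bS: "\<And>a b c. mulS a (addS b c) = addS (mulS a b) (mulS a (addS (ginv mulS a) c))"
    using S T unfolding left_semi_brace_def by blast+
  have aSa: "\<And>a b c. addS (addS a b) c = addS a (addS b c)"
    using aS unfolding is_semigroup_op_def by blast
  have aTa: "\<And>a b c. addT (addT a b) c = addT a (addT b c)"
    using aT unfolding is_semigroup_op_def by blast
  have sadd: "\<And>u a b. \<sigma> u (addS a b) = addS (\<sigma> u a) (\<sigma> u b)"
    and smul: "\<And>u a b. \<sigma> u (mulS a b) = mulS (\<sigma> u a) (\<sigma> u b)"
    and sinj: "\<And>u. inj (\<sigma> u)"
    using sigma_aut unfolding is_brace_aut_def bij_def by blast+
  have dadd: "\<And>a u v. \<delta> a (addT u v) = addT (\<delta> a u) (\<delta> a v)"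
    using delta_aut unfolding is_add_aut_def by blast
  define eS where "eS = gunit mulS"
  define eT where "eT = gunit mulT"
  note uS = grp_unit[OF gS, folded eS_def]
  note uT = grp_unit[OF gT, folded eT_def]
  note iS = grp_inv[OF gS, folded eS_def]
  note iT = grp_inv[OF gT, folded eT_def]
  note mSa = grp_assoc[OF gS]
  note mTa = grp_assoc[OF gT]
  have s1: "\<And>u. \<sigma> u eS = eS"
  proof -
    fix u
    have "mulS (\<sigma> u eS) (\<sigma> u eS) = \<sigma> u eS" using smul[of u eS eS] uS by simp
    from grp_idem[OF gS this] show "\<sigma> u eS = eS" unfolding eS_def .
  qed
  have sid: "\<And>x. \<sigma> eT x = x"
  proof -
    fix x
    have "\<sigma> eT = \<sigma> eT \<circ> \<sigma> eT" using sigma_hom[of eT eT] uT(1)[of eT] by simp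
    then have "\<sigma> eT (\<sigma> eT x) = \<sigma> eT x" by (simp add: fun_eq_iff)
    then show "\<sigma> eT x = x" using sinj unfolding inj_def by blast
  qed
  have sinv: "\<And>u x. \<sigma> u (\<sigma> (ginv mulT u) x) = x"
  proof -
    fix u x
    have "\<sigma> u (\<sigma> (ginv mulT u) x) = \<sigma> (mulT u (ginv mulT u)) x" using sigma_hom by simp
    then show "\<sigma> u (\<sigma> (ginv mulT u) x) = x" using iT sid by simp
  qed
  have sginv: "\<And>u a. \<sigma> u (ginv mulS a) = ginv mulS (\<sigma> u a)"
  proof -
    fix u a
    have "mulS (\<sigma> u a) (\<sigma> u (ginv mulS a)) = \<sigma> u (mulS a (ginv mulS a))" using smul by simp
    also have "\<dots> = eS" using iS s1 by simp
    finally have "mulS (\<sigma> u a) (\<sigma> u (ginv mulS a)) = gunit mulS" unfolding eS_def .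
    from ginv_eq[OF gS this] show "\<sigma> u (ginv mulS a) = ginv mulS (\<sigma> u a)" by simp
  qed
  define A where "A = dsd_add addS addT \<delta>"
  define M where "M = dsd_mul mulS mulT \<sigma>"
  have Aeq: "\<And>a u b v. A (a,u) (b,v) = (addS a b, addT (\<delta> b u) v)"
    unfolding A_def dsd_add_def by simp
  have Meq: "\<And>a u b v. M (a,u) (b,v) = (mulS a (\<sigma> u b), mulT u v)"
    unfolding M_def dsd_mul_def by simp
  have semA: "is_semigroup_op A"
    unfolding is_semigroup_op_def
  proof (intro allI)
    fix x y z :: "'a \<times> 'b"
    obtain a u where x: "x = (a,u)" by fastforce
    obtain b v where y: "y = (b,v)" by fastforce
    obtain c w where z: "z = (c,w)" by fastforce
    show "A (A x y) z = A x (A y z)"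
      unfolding x y z Aeq by (simp add: aSa aTa dadd delta_antihom)
  qed
  define I where "I = (\<lambda>(a,u). (\<sigma> (ginv mulT u) (ginv mulS a), ginv mulT u))"
  have Ieq: "\<And>a u. I (a,u) = (\<sigma> (ginv mulT u) (ginv mulS a), ginv mulT u)"
    unfolding I_def by simp
  have inv1: "\<And>x. M x (I x) = (eS, eT)"
  proof -
    fix x :: "'a \<times> 'b"
    obtain a u where x: "x = (a,u)" by fastforce
    show "M x (I x) = (eS, eT)" unfolding x Ieq Meq by (simp add: sinv iS iT)
  qed
  have inv2: "\<And>x. M (I x) x = (eS, eT)"
  proof -
    fix x :: "'a \<times> 'b"
    obtain a u where x: "x = (a,u)" by fastforce
    show "M (I x) x = (eS, eT)" unfolding x Ieq Meq
      by (simp add: smul[symmetric] iS iT s1)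
  qed
  have idM: "\<And>x. M (eS,eT) x = x \<and> M x (eS,eT) = x"
  proof -
    fix x :: "'a \<times> 'b"
    obtain a u where x: "x = (a,u)" by fastforce
    show "M (eS,eT) x = x \<and> M x (eS,eT) = x" unfolding x Meq by (simp add: sid uS uT s1)
  qed
  have grpM: "is_group_op M"
    unfolding is_group_op_def
  proof (intro conjI)
    show "is_semigroup_op M" unfolding is_semigroup_op_def
    proof (intro allI)
      fix x y z :: "'a \<times> 'b"
      obtain a u where x: "x = (a,u)" by fastforce
      obtain b v where y: "y = (b,v)" by fastforce
      obtain c w where z: "z = (c,w)" by fastforce
      show "M (M x y) z = M x (M y z)"
        unfolding x y z Meq by (simp add: mSa mTa smul sigma_hom)
    qed
    show "\<exists>e. (\<forall>a. M e a = a \<and> M a e = a) \<and> (\<forall>a. \<exists>b. M a b = e \<and> M b a = e)"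
    proof (rule exI[of _ "(eS,eT)"], intro conjI allI)
      fix x :: "'a \<times> 'b"
      show "M (eS,eT) x = x" "M x (eS,eT) = x" using idM by auto
    next
      fix x show "\<exists>b. M x b = (eS,eT) \<and> M b x = (eS,eT)" using inv1 inv2 by blast
    qed
  qed
  have gM: "gunit M = (eS,eT)"
  proof -
    have "gunit M = M (eS,eT) (gunit M)" using idM by simp
    also have "\<dots> = (eS,eT)" using grp_unit(2)[OF grpM] by simp
    finally show ?thesis .
  qed
  have ginvM: "\<And>x. ginv M x = I x" using ginv_eq[OF grpM] inv1 gM by simp
  have brace: "\<And>x y z. M x (A y z) = A (M x y) (M x (A (ginv M x) z))"
  proof -
    fix x y z :: "'a \<times> 'b"
    obtain a u where x: "x = (a,u)" by fastforce
    obtain b v where y: "y = (b,v)" by fastforce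
    obtain c w where z: "z = (c,w)" by fastforce
    have c1: "mulS a (\<sigma> u (addS b c)) =
        addS (mulS a (\<sigma> u b)) (mulS a (\<sigma> u (addS (\<sigma> (ginv mulT u) (ginv mulS a)) c)))"
      by (simp only: sadd sinv) (rule bS)
    have c2: "mulS a (\<sigma> u (addS (\<sigma> (ginv mulT u) (ginv mulS a)) c)) = lam addS mulS a (\<sigma> u c)"
      by (simp add: sadd sinv lam_def)
    show "M x (A y z) = A (M x y) (M x (A (ginv M x) z))"
      unfolding x y z ginvM Ieq Aeq Meq using c1 c2 compat[of a u c v w] by simp
  qed
  have lsb: "left_semi_brace A M"
    unfolding left_semi_brace_def using semA grpM brace by blast
  have lc: "left_cancellative addS \<and> left_cancellative addT \<longrightarrow> left_cancellative A"
  proof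
    assume h: "left_cancellative addS \<and> left_cancellative addT"
    show "left_cancellative A" unfolding left_cancellative_def
    proof (intro allI impI)
      fix x y z :: "'a \<times> 'b"
      obtain a u where x: "x = (a,u)" by fastforce
      obtain b v where y: "y = (b,v)" by fastforce
      obtain c w where z: "z = (c,w)" by fastforce
      assume "A x y = A x z"
      then have e1: "addS a b = addS a c" and e2: "addT (\<delta> b u) v = addT (\<delta> c u) w"
        unfolding x y z Aeq by auto
      have "b = c" using e1 h unfolding left_cancellative_def by blast
      then have "v = w" using e2 h unfolding left_cancellative_def by blast
      then show "y = z" using \<open>b = c\<close> y z by simp
    qed
  qed
  show ?thesis using lsb lc unfolding A_def M_def by blast
qed

end
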